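(* In the setting below, suppose $p,q\geq5$. Then for all $i,j,k,l\in\mathbb Z/N\mathbb Z$ with $i\neq j$ and $k\neq l$ (not otherwise required to be distinct) we have $\#(P_{ij}\cap P_{kl})\geq p-3$ and $\#(Q_{ij}\cap Q_{kl})\geq q-3$.
   Context: Setting: $p,q$ distinct primes, $N=p+q$; $M=(m_{ik})_{i,k\in\mathbb Z/N\mathbb Z}$ has entries in $\mathbb Z/pq\mathbb Z$ and $(e^{2\pi i\,m_{ik}/pq})$ is a complex Hadamard matrix (unimodular entries, orthogonal rows). $L_i(k)=m_{ik}$, $L_{ij}=L_j-L_i$. For $d\mid pq$, $d(\mathbb Z/pq\mathbb Z)$ is the subgroup of multiples of $d$. For distinct $i,j$ there is a partition $\mathbb Z/N\mathbb Z=P_{ij}\sqcup Q_{ij}\sqcup R_{ij}$ and $r\in\mathbb Z/pq\mathbb Z$ with: $\#R_{ij}=2$ and $L_{ij}\equiv r$ on $R_{ij}$; $\#P_{ij}=p-1$ and $L_{ij}(P_{ij})=(r+q(\mathbb Z/pq\mathbb Z))\setminus\{r\}$; $\#Q_{ij}=q-1$ and $L_{ij}(Q_{ij})=(r+p(\mathbb Z/pq\mathbb Z))\setminus\{r\}$. This partition is unique ($R_{ij}$ is the pair of indices where $L_{ij}$ takes its unique repeated value). Put $P^+_{ij}=P_{ij}\cup R_{ij}$, $Q^+_{ij}=Q_{ij}\cup R_{ij}$. *)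

theory Defs
  imports Complex_Main "HOL-Computational_Algebra.Primes"
begin

text \<open>Indices of Z/NZ are represented by the naturals 0..<N; entries of Z/pqZ by integers,
  read modulo p*q.  The matrix M is a function nat => nat => int, M i k = m_ik.\<close>

definition hadamard_phase :: "nat \<Rightarrow> nat \<Rightarrow> (nat \<Rightarrow> nat \<Rightarrow> int) \<Rightarrow> bool" where
  "hadamard_phase N n M \<longleftrightarrow>
     (\<forall>i<N. \<forall>j<N. i \<noteq> j \<longrightarrow>
        (\<Sum>k<N. exp (2 * pi * \<i> * of_int (M i k) / of_nat n) *
                 cnj (exp (2 * pi * \<i> * of_int (M j k) / of_nat n))) = 0)"

definition Ldiff :: "nat \<Rightarrow> nat \<Rightarrow> (nat \<Rightarrow> nat \<Rightarrow> int) \<Rightarrow> nat \<Rightarrow> nat \<Rightarrow> nat \<Rightarrow> int" where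
  "Ldiff p q M i j k = (M j k - M i k) mod int (p * q)"

definition coset_mod :: "nat \<Rightarrow> nat \<Rightarrow> nat \<Rightarrow> int \<Rightarrow> int set" where
  "coset_mod p q d r = {x. \<exists>t::int. x = (r + int d * t) mod int (p * q)}"

definition pqr_partition ::
  "nat \<Rightarrow> nat \<Rightarrow> (nat \<Rightarrow> nat \<Rightarrow> int) \<Rightarrow> nat \<Rightarrow> nat \<Rightarrow>
   nat set \<Rightarrow> nat set \<Rightarrow> nat set \<Rightarrow> int \<Rightarrow> bool" where
  "pqr_partition p q M i j P Q R r \<longleftrightarrow>
     P \<union> Q \<union> R = {..<p + q} \<and> P \<inter> Q = {} \<and> P \<inter> R = {} \<and> Q \<inter> R = {} \<and>
     r \<in> {0..<int (p * q)} \<and>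
     card R = 2 \<and> (\<forall>k\<in>R. Ldiff p q M i j k = r) \<and>
     card P = p - 1 \<and> Ldiff p q M i j ` P = coset_mod p q q r - {r} \<and>
     card Q = q - 1 \<and> Ldiff p q M i j ` Q = coset_mod p q p r - {r}"

definition Pset :: "nat \<Rightarrow> nat \<Rightarrow> (nat \<Rightarrow> nat \<Rightarrow> int) \<Rightarrow> nat \<Rightarrow> nat \<Rightarrow> nat set" where
  "Pset p q M i j = (THE P. \<exists>Q R r. pqr_partition p q M i j P Q R r)"

definition Qset :: "nat \<Rightarrow> nat \<Rightarrow> (nat \<Rightarrow> nat \<Rightarrow> int) \<Rightarrow> nat \<Rightarrow> nat \<Rightarrow> nat set" where
  "Qset p q M i j = (THE Q. \<exists>P R r. pqr_partition p q M i j P Q R r)"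

end

theory Submission
  imports Defs "HOL-Number_Theory.Cong"
begin



lemma crt_eq:
  fixes x y :: int and d e :: nat
  assumes "prime d" "prime e" "d \<noteq> e"
    and "x mod d = y mod d" "x mod e = y mod e"
    and "0 \<le> x" "x < int d * int e" "0 \<le> y" "y < int d * int e"
  shows "x = y"
proof -
  have cop: "coprime (int d) (int e)"
    using assms(1-3) by (simp add: primes_coprime)
  have "[x = y] (mod int d * int e)"
    using coprime_cong_mult[of x y "int d" "int e"] cop assms(4,5) by (simp add: cong_def)
  then have "x mod (int d * int e) = y mod (int d * int e)" by (simp add: cong_def)
  then show ?thesis using assms(6-9) by simp
qed

lemma coset_mod_mem_mod:
  assumes "d dvd p * q" "x \<in> coset_mod p q d r"
  shows "x mod int d = r mod int d"
proof -
  obtain t where x: "x = (r + int d * t) mod int (p*q)" using assms(2) unfolding coset_mod_def by blast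
  have "int d dvd int (p*q)" using assms(1) by (simp only: of_nat_dvd_iff)
  then have "x mod int d = (r + int d * t) mod int d" using x by (simp add: mod_mod_cancel)
  then show ?thesis by simp
qed

lemma coset_mod_image:
  assumes "d > 0" "e > 0" "p * q = d * e"
  shows "coset_mod p q d r = (\<lambda>s. r mod int d + int d * s) ` {0..<int e}"
proof (rule set_eqI, rule iffI)
  fix x assume "x \<in> coset_mod p q d r"
  then obtain t where x: "x = (r + int d * t) mod int (p*q)" unfolding coset_mod_def by blast
  have pq: "int (p*q) = int d * int e" using assms(3) by simp
  have pqpos: "int (p*q) > 0" using pq assms by simp
  have xr0: "0 \<le> x" "x < int (p*q)" unfolding x using pqpos by (rule pos_mod_sign, rule pos_mod_bound)
  have xr: "0 \<le> x" "x < int d * int e" using xr0 pq by simp_all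
  have "d dvd p*q" using assms(3) by simp
  then have xm: "x mod int d = r mod int d" using coset_mod_mem_mod \<open>x \<in> coset_mod p q d r\<close> by blast
  have "x = int d * (x div int d) + x mod int d" by simp
  then have "x = r mod int d + int d * (x div int d)" using xm by linarith
  moreover have "x div int d < int e"
  proof (rule ccontr)
    assume "\<not> x div int d < int e"
    then have "int d * int e \<le> int d * (x div int d)" by (intro mult_left_mono) auto
    moreover have "0 \<le> x mod int d" using assms by simp
    ultimately show False using xr \<open>x = int d * (x div int d) + x mod int d\<close> by linarith
  qed
  moreover have "0 \<le> x div int d" using xr assms by (simp add: pos_imp_zdiv_nonneg_iff)
  ultimately show "x \<in> (\<lambda>s. r mod int d + int d * s) ` {0..<int e}"
    by (intro image_eqI[where x="x div int d"]) auto
next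
  fix x assume "x \<in> (\<lambda>s. r mod int d + int d * s) ` {0..<int e}"
  then obtain s where s: "0 \<le> s" "s < int e" "x = r mod int d + int d * s" by auto
  have pq: "int (p*q) = int d * int e" using assms(3) by simp
  have r1: "0 \<le> r mod int d" "r mod int d < int d" using assms by auto
  have "int d * s \<le> int d * (int e - 1)" using s by (intro mult_left_mono) auto
  then have m1: "int d * s \<le> int d * int e - int d" by (simp add: right_diff_distrib)
  have m2: "0 \<le> int d * s" using s by simp
  have xr: "0 \<le> x" "x < int d * int e" using s(3) r1 m1 m2 by linarith+
  have rr: "r = int d * (r div int d) + r mod int d" by simp
  have "r + int d * (s - r div int d) = x" using s(3) rr by (simp add: algebra_simps)
  moreover have "x mod int (p*q) = x" using xr pq by (simp add: mod_pos_pos_trivial)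
  ultimately have "x = (r + int d * (s - r div int d)) mod int (p*q)" by simp
  then show "x \<in> coset_mod p q d r" unfolding coset_mod_def by blast
qed

lemma coset_mod_card:
  assumes "d > 0" "e > 0" "p * q = d * e"
  shows "card (coset_mod p q d r) = e"
proof -
  have "inj_on (\<lambda>s. r mod int d + int d * s) {0..<int e}" using assms(1) by (auto simp: inj_on_def)
  then show ?thesis using coset_mod_image[OF assms] by (simp add: card_image)
qed




definition half :: "int \<Rightarrow> nat set \<Rightarrow> (nat \<Rightarrow> int) \<Rightarrow> int \<Rightarrow> nat set \<Rightarrow> bool" where
  "half m S a r P \<longleftrightarrow> (\<forall>t\<in>S-P. a t = r) \<and> inj_on a P \<and> (\<forall>t\<in>P. a t \<noteq> r) \<and>
     (\<forall>t. 0 \<le> a t \<and> a t < m) \<and> 0 \<le> r \<and> r < m"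

definition pdata :: "nat \<Rightarrow> nat \<Rightarrow> nat set \<Rightarrow> nat set \<Rightarrow> nat set \<Rightarrow> (nat \<Rightarrow> int) \<Rightarrow> int \<Rightarrow> (nat \<Rightarrow> int) \<Rightarrow> int \<Rightarrow> bool" where
  "pdata p q S P Q a r b s \<longleftrightarrow> P \<subseteq> S \<and> Q \<subseteq> S \<and> P \<inter> Q = {} \<and> card P = p - 1 \<and> card Q = q - 1 \<and>
     half (int p) S a r P \<and> half (int q) S b s Q"

definition triple where
  "triple p q S P1 Q1 a1 r1 b1 s1 P2 Q2 a2 r2 b2 s2 P3 Q3 a3 r3 b3 s3 \<longleftrightarrow>
     finite S \<and> card S = p + q \<and> 5 \<le> p \<and> 5 \<le> q \<and>
     pdata p q S P1 Q1 a1 r1 b1 s1 \<and> pdata p q S P2 Q2 a2 r2 b2 s2 \<and> pdata p q S P3 Q3 a3 r3 b3 s3 \<and>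
     (\<forall>t\<in>S. a3 t = (a2 t - a1 t) mod int p \<and> b3 t = (b2 t - b1 t) mod int q)"

lemma triple_swap:
  "triple p q S P1 Q1 a1 r1 b1 s1 P2 Q2 a2 r2 b2 s2 P3 Q3 a3 r3 b3 s3 \<Longrightarrow>
   triple q p S Q1 P1 b1 s1 a1 r1 Q2 P2 b2 s2 a2 r2 Q3 P3 b3 s3 a3 r3"
  unfolding triple_def pdata_def by auto

lemma sub_cancel1:
  fixes a b c m :: int
  assumes "0 \<le> a" "a < m" "0 \<le> b" "b < m" "(c - a) mod m = (c - b) mod m"
  shows "a = b"
proof -
  have "(c - (c - a)) mod m = (c - (c - b)) mod m"
    using mod_diff_cong[of c m c "c - a" "c - b"] assms(5) by simp
  then have "a mod m = b mod m" by simp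
  then show ?thesis using assms(1-4) by (simp add: mod_pos_pos_trivial)
qed

lemma sub_cancel2:
  fixes a b c m :: int
  assumes "0 \<le> a" "a < m" "0 \<le> b" "b < m" "(a - c) mod m = (b - c) mod m"
  shows "a = b"
proof -
  have "((a - c) + c) mod m = ((b - c) + c) mod m"
    using mod_add_cong[of "a - c" m "b - c" c c] assms(5) by simp
  then have "a mod m = b mod m" by simp
  then show ?thesis using assms(1-4) by (simp add: mod_pos_pos_trivial)
qed

lemma G:
  assumes h1: "half m S a1 r1 P1" and h2: "half m S a2 r2 P2"
    and rel: "\<forall>t\<in>S. a3 t = (a2 t - a1 t) mod m"
  shows "inj_on a3 (S \<inter> P1 - P2)" "\<forall>t\<in>S \<inter> P1 - P2. a3 t \<noteq> (r2 - r1) mod m"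
    "inj_on a3 (S \<inter> P2 - P1)" "\<forall>t\<in>S \<inter> P2 - P1. a3 t \<noteq> (r2 - r1) mod m"
    "\<forall>t\<in>S - P1 - P2. a3 t = (r2 - r1) mod m"
proof -
  note H1 = h1[unfolded half_def] and H2 = h2[unfolded half_def]
  have e1: "a3 t = (r2 - a1 t) mod m" if "t \<in> S \<inter> P1 - P2" for t
    using that rel H2 by auto
  have e2: "a3 t = (a2 t - r1) mod m" if "t \<in> S \<inter> P2 - P1" for t
    using that rel H1 by auto
  show "inj_on a3 (S \<inter> P1 - P2)"
  proof (rule inj_onI)
    fix x y assume x: "x \<in> S \<inter> P1 - P2" and y: "y \<in> S \<inter> P1 - P2" and eq: "a3 x = a3 y"
    have "a1 x = a1 y"
      using sub_cancel1[of "a1 x" m "a1 y" r2] e1[OF x] e1[OF y] eq H1 by auto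
    then show "x = y" using H1 x y by (auto dest: inj_onD)
  qed
  show "\<forall>t\<in>S \<inter> P1 - P2. a3 t \<noteq> (r2 - r1) mod m"
  proof
    fix t assume t: "t \<in> S \<inter> P1 - P2"
    show "a3 t \<noteq> (r2 - r1) mod m"
    proof
      assume "a3 t = (r2 - r1) mod m"
      then have "a1 t = r1" using sub_cancel1[of "a1 t" m r1 r2] e1[OF t] H1 by auto
      then show False using H1 t by auto
    qed
  qed
  show "inj_on a3 (S \<inter> P2 - P1)"
  proof (rule inj_onI)
    fix x y assume x: "x \<in> S \<inter> P2 - P1" and y: "y \<in> S \<inter> P2 - P1" and eq: "a3 x = a3 y"
    have "a2 x = a2 y"
      using sub_cancel2[of "a2 x" m "a2 y" r1] e2[OF x] e2[OF y] eq H2 by auto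
    then show "x = y" using H2 x y by (auto dest: inj_onD)
  qed
  show "\<forall>t\<in>S \<inter> P2 - P1. a3 t \<noteq> (r2 - r1) mod m"
  proof
    fix t assume t: "t \<in> S \<inter> P2 - P1"
    show "a3 t \<noteq> (r2 - r1) mod m"
    proof
      assume "a3 t = (r2 - r1) mod m"
      then have "a2 t = r2" using sub_cancel2[of "a2 t" m r2 r1] e2[OF t] H2 by auto
      then show False using H2 t by auto
    qed
  qed
  show "\<forall>t\<in>S - P1 - P2. a3 t = (r2 - r1) mod m"
    using rel H1 H2 by auto
qed

lemma card_le1:
  assumes "inj_on f A" "\<forall>t\<in>A \<inter> U. f t = c"
  shows "card (A \<inter> U) \<le> 1"
proof -
  have "card (A \<inter> U) = card (f ` (A \<inter> U))"
    using assms(1) by (metis card_image inj_on_subset Int_lower1)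
  also have "f ` (A \<inter> U) \<subseteq> {c}" using assms(2) by auto
  then have "card (f ` (A \<inter> U)) \<le> card {c}" by (intro card_mono) auto
  finally show ?thesis by simp
qed

lemma L1:
  assumes T: "triple p q S P1 Q1 a1 r1 b1 s1 P2 Q2 a2 r2 b2 s2 P3 Q3 a3 r3 b3 s3"
  shows "card (P1 \<inter> Q2) \<le> 2"
proof -
  note TT = T[unfolded triple_def pdata_def]
  have fin: "finite S" using TT by simp
  let ?C = "P1 \<inter> Q2"
  have CS: "?C \<subseteq> S" using TT by auto
  have "?C \<subseteq> S \<inter> P1 - P2" using TT by auto
  moreover have "inj_on a3 (S \<inter> P1 - P2)"
    using G(1)[of "int p" S a1 r1 P1 a2 r2 P2 a3] TT by auto
  ultimately have ia: "inj_on a3 ?C" by (rule inj_on_subset[rotated])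
  have "?C \<subseteq> S \<inter> Q2 - Q1" using TT by auto
  moreover have "inj_on b3 (S \<inter> Q2 - Q1)"
    using G(3)[of "int q" S b1 s1 Q1 b2 s2 Q2 b3] TT by auto
  ultimately have ib: "inj_on b3 ?C" by (rule inj_on_subset[rotated])
  have c1: "card (?C \<inter> (S - P3)) \<le> 1"
    by (rule card_le1[OF ia]) (use TT in \<open>auto simp: half_def\<close>)
  have c2: "card (?C \<inter> (S - Q3)) \<le> 1"
    by (rule card_le1[OF ib]) (use TT in \<open>auto simp: half_def\<close>)
  have "?C \<subseteq> (?C \<inter> (S - P3)) \<union> (?C \<inter> (S - Q3))" using CS TT by auto
  moreover have "finite ((?C \<inter> (S - P3)) \<union> (?C \<inter> (S - Q3)))"
    by (rule finite_subset[OF _ fin]) auto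
  ultimately have "card ?C \<le> card ((?C \<inter> (S - P3)) \<union> (?C \<inter> (S - Q3)))"
    by (intro card_mono)
  also have "\<dots> \<le> card (?C \<inter> (S - P3)) + card (?C \<inter> (S - Q3))" by (rule card_Un_le)
  finally show ?thesis using c1 c2 by simp
qed

lemma two_elems:
  assumes "finite A" "2 \<le> card A"
  obtains x y where "x \<in> A" "y \<in> A" "x \<noteq> y"
proof -
  have "\<not> card A \<le> Suc 0" using assms(2) by simp
  then have "\<not> (\<forall>x\<in>A. \<forall>y\<in>A. x = y)" using card_le_Suc0_iff_eq[OF assms(1)] by blast
  then show ?thesis using that by blast
qed

lemma L2:
  assumes T: "triple p q S P1 Q1 a1 r1 b1 s1 P2 Q2 a2 r2 b2 s2 P3 Q3 a3 r3 b3 s3"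
    and c: "2 \<le> card (S - P1 - P2)"
  shows "S - P1 - P2 \<subseteq> S - P3" "(S - P3) - (S - P1 - P2) \<subseteq> P1 \<inter> P2"
proof -
  note TT = T[unfolded triple_def pdata_def]
  have h1: "half (int p) S a1 r1 P1" and h2: "half (int p) S a2 r2 P2" and h3: "half (int p) S a3 r3 P3"
    and rel: "\<forall>t\<in>S. a3 t = (a2 t - a1 t) mod int p" using TT by auto
  note g = G[OF h1 h2 rel]
  note H3 = h3[unfolded half_def]
  let ?e = "(r2 - r1) mod int p"
  have fin: "finite (S - P1 - P2)" using TT by simp
  obtain s t where st: "s \<in> S - P1 - P2" "t \<in> S - P1 - P2" "s \<noteq> t"
    using two_elems[OF fin c] by blast
  have r3: "r3 = ?e"
  proof (rule ccontr)
    assume ne: "r3 \<noteq> ?e"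
    have inP3: "x \<in> P3" if "x \<in> S - P1 - P2" for x
    proof (rule ccontr)
      assume "x \<notin> P3"
      then have "a3 x = r3" using H3 that by auto
      moreover have "a3 x = ?e" using g(5) that by blast
      ultimately show False using ne by simp
    qed
    have "s \<in> P3" using inP3 st by blast
    moreover have "t \<in> P3" using inP3 st by blast
    moreover have "a3 s = a3 t" using st g(5) by simp
    ultimately show False using H3 st(3) by (auto dest: inj_onD)
  qed
  show "S - P1 - P2 \<subseteq> S - P3"
  proof
    fix t assume t: "t \<in> S - P1 - P2"
    then have "a3 t = ?e" using g(5) by simp
    then have "t \<notin> P3" using H3 r3 by auto
    then show "t \<in> S - P3" using t by simp
  qed
  show "(S - P3) - (S - P1 - P2) \<subseteq> P1 \<inter> P2"
  proof
    fix t assume t: "t \<in> (S - P3) - (S - P1 - P2)"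
    then have "a3 t = ?e" using H3 r3 by auto
    then show "t \<in> P1 \<inter> P2" using t g(2) g(4) by auto
  qed
qed

lemma L3:
  assumes T: "triple p q S P1 Q1 a1 r1 b1 s1 P2 Q2 a2 r2 b2 s2 P3 Q3 a3 r3 b3 s3"
  shows "P1 \<inter> Q2 = {}" "Q1 \<inter> P2 = {}"
    "\<And>W. W \<subseteq> S \<Longrightarrow> W \<inter> Q1 = {} \<Longrightarrow> W \<inter> Q2 = {} \<Longrightarrow> card (W \<inter> (S - P3)) \<le> 2"
proof -
  note TT = T[unfolded triple_def pdata_def]
  have fin: "finite S" and cS: "card S = p + q" and p5: "5 \<le> p" and q5: "5 \<le> q"
    and sub: "P1 \<subseteq> S" "Q1 \<subseteq> S" "P2 \<subseteq> S" "Q2 \<subseteq> S" "P3 \<subseteq> S" "Q3 \<subseteq> S"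
    and dis: "P1 \<inter> Q1 = {}" "P2 \<inter> Q2 = {}" "P3 \<inter> Q3 = {}"
    and cd: "card P1 = p - 1" "card Q1 = q - 1" "card P2 = p - 1" "card Q2 = q - 1" "card P3 = p - 1" "card Q3 = q - 1"
    using TT by auto
  have finP: "finite P1" "finite P2" "finite P3" "finite Q1" "finite Q2" "finite Q3"
    using sub fin finite_subset by blast+
  have C: "card (P1 \<inter> Q2) \<le> 2" by (rule L1[OF T])
  have D: "card (Q1 \<inter> P2) \<le> 2" using L1[OF triple_swap[OF T]] by (simp add: Int_commute)
  have cSP1: "card (S - P1) = q + 1" using card_Diff_subset[OF finP(1) sub(1)] cS cd p5 by simp
  have cSP3: "card (S - P3) = q + 1" using card_Diff_subset[OF finP(3) sub(5)] cS cd p5 by simp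
  have cSQ1: "card (S - Q1) = p + 1" using card_Diff_subset[OF finP(4) sub(2)] cS cd q5 by simp
  have cR1: "card (S - P1 - Q1) = 2"
  proof -
    have "Q1 \<subseteq> S - P1" using sub dis by auto
    then have "card (S - P1 - Q1) = card (S - P1) - card Q1"
      using card_Diff_subset[OF finP(4)] by blast
    then show ?thesis using cSP1 cd q5 by simp
  qed
  have cP21: "card (P2 - P1) \<le> 4"
  proof -
    have "P2 - P1 \<subseteq> (Q1 \<inter> P2) \<union> (S - P1 - Q1)" using sub by auto
    then have "card (P2 - P1) \<le> card ((Q1 \<inter> P2) \<union> (S - P1 - Q1))"
      by (rule card_mono[rotated]) (use fin finP in auto)
    also have "\<dots> \<le> card (Q1 \<inter> P2) + card (S - P1 - Q1)" by (rule card_Un_le)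
    finally show ?thesis using D cR1 by simp
  qed
  have cQ21: "card (Q2 - Q1) \<le> 4"
  proof -
    have cR1': "card (S - Q1 - P1) = 2" using cR1 by (simp add: Diff_eq Int_ac)
    have "Q2 - Q1 \<subseteq> (P1 \<inter> Q2) \<union> (S - Q1 - P1)" using sub by auto
    then have "card (Q2 - Q1) \<le> card ((P1 \<inter> Q2) \<union> (S - Q1 - P1))"
      by (rule card_mono[rotated]) (use fin finP in auto)
    also have "\<dots> \<le> card (P1 \<inter> Q2) + card (S - Q1 - P1)" by (rule card_Un_le)
    finally show ?thesis using C cR1' by simp
  qed
  have Beq: "S - P1 - P2 = (S - P1) - (P2 - P1)" by auto
  have cB: "card (S - P1 - P2) = q + 1 - card (P2 - P1)"
    unfolding Beq using card_Diff_subset[of "P2 - P1" "S - P1"] finP sub cSP1 by auto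
  have cB2: "2 \<le> card (S - P1 - P2)" using cB cP21 q5 by simp
  have Aeq: "S - Q1 - Q2 = (S - Q1) - (Q2 - Q1)" by auto
  have cA: "card (S - Q1 - Q2) = p + 1 - card (Q2 - Q1)"
    unfolding Aeq using card_Diff_subset[of "Q2 - Q1" "S - Q1"] finP sub cSQ1 by auto
  have cA2: "2 \<le> card (S - Q1 - Q2)" using cA cQ21 p5 by simp
  note l2 = L2[OF T cB2]
  note l2' = L2[OF triple_swap[OF T] cA2]
  have cover: "S \<subseteq> (S - P3) \<union> (S - Q3)" using dis by auto
  show PQ: "P1 \<inter> Q2 = {}"
  proof (rule ccontr)
    assume "P1 \<inter> Q2 \<noteq> {}"
    then obtain t where t: "t \<in> P1" "t \<in> Q2" by blast
    then have "t \<in> S" using sub by auto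
    then have "t \<in> S - P3 \<or> t \<in> S - Q3" using cover by blast
    then show False
    proof
      assume "t \<in> S - P3"
      then have "t \<in> (S - P3) - (S - P1 - P2)" using t by blast
      then have "t \<in> P2" using l2(2) by blast
      then show False using t dis(2) by blast
    next
      assume "t \<in> S - Q3"
      then have "t \<in> (S - Q3) - (S - Q1 - Q2)" using t by blast
      then have "t \<in> Q1" using l2'(2) by blast
      then show False using t dis(1) by blast
    qed
  qed
  show QP: "Q1 \<inter> P2 = {}"
  proof (rule ccontr)
    assume "Q1 \<inter> P2 \<noteq> {}"
    then obtain t where t: "t \<in> Q1" "t \<in> P2" by blast
    then have "t \<in> S" using sub by auto
    then have "t \<in> S - P3 \<or> t \<in> S - Q3" using cover by blast
    then show False
    proof
      assume "t \<in> S - P3"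
      then have "t \<in> (S - P3) - (S - P1 - P2)" using t by blast
      then have "t \<in> P1" using l2(2) by blast
      then show False using t dis(1) by blast
    next
      assume "t \<in> S - Q3"
      then have "t \<in> (S - Q3) - (S - Q1 - Q2)" using t by blast
      then have "t \<in> Q2" using l2'(2) by blast
      then show False using t dis(2) by blast
    qed
  qed
  fix W assume W: "W \<subseteq> S" "W \<inter> Q1 = {}" "W \<inter> Q2 = {}"
  let ?B = "S - P1 - P2" and ?R = "S - P1 - Q1"
  have c3: "card ((S - P3) - ?B) = card (P2 - P1)"
    using card_Diff_subset[of ?B "S - P3"] l2(1) fin cSP3 cB cP21 q5 by auto
  have eqR: "P2 - P1 = ?R \<inter> P2" using QP sub by auto
  have "W \<inter> (S - P3) \<subseteq> (?R - P2) \<union> ((S - P3) - ?B)" using W by auto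
  then have "card (W \<inter> (S - P3)) \<le> card ((?R - P2) \<union> ((S - P3) - ?B))"
    by (rule card_mono[rotated]) (use fin finP in auto)
  also have "\<dots> \<le> card (?R - P2) + card ((S - P3) - ?B)" by (rule card_Un_le)
  also have "\<dots> = card (?R - P2) + card (?R \<inter> P2)" using c3 eqR by simp
  also have "\<dots> = card ?R"
    using card_Int_Diff[of ?R P2] fin by simp
  finally show "card (W \<inter> (S - P3)) \<le> 2" using cR1 by simp
qed




lemma neg_mod_iff: "((- x) mod m = (- y) mod m) \<longleftrightarrow> (x mod (m::int) = y mod m)"
proof
  assume "(- x) mod m = (- y) mod m"
  then have "(- (- x)) mod m = (- (- y)) mod m" by (rule mod_minus_cong)
  then show "x mod m = y mod m" by simp
next
  assume "x mod m = y mod m"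
  then show "(- x) mod m = (- y) mod m" by (rule mod_minus_cong)
qed

context
  fixes p q :: nat and M :: "nat \<Rightarrow> nat \<Rightarrow> int"
  assumes pp: "prime p" and pq: "prime q" and pne: "p \<noteq> q"
begin

lemma p_pos: "p > 0"
  using pp prime_gt_0_nat by blast
lemma q_pos: "q > 0"
  using pq prime_gt_0_nat by blast

lemma L_lo: "0 \<le> Ldiff p q M a b t"
proof -
  have "int (p*q) > 0" using p_pos q_pos by simp
  then show ?thesis unfolding Ldiff_def by (rule pos_mod_sign)
qed

lemma L_hi: "Ldiff p q M a b t < int p * int q"
proof -
  have "int (p*q) > 0" using p_pos q_pos by simp
  then have "Ldiff p q M a b t < int (p*q)" unfolding Ldiff_def by (rule pos_mod_bound)
  then show ?thesis by simp
qed

lemma crt: "x mod int p = y mod int p \<Longrightarrow> x mod int q = y mod int q \<Longrightarrow> 0 \<le> x \<Longrightarrow> x < int p * int q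
  \<Longrightarrow> 0 \<le> y \<Longrightarrow> y < int p * int q \<Longrightarrow> x = y"
  by (rule crt_eq[OF pp pq pne])

lemma part_unf1:
  assumes H: "pqr_partition p q M a b P Q R r"
  shows "P \<union> Q \<union> R = {..<p + q}"
proof -
  note D = H[unfolded pqr_partition_def]
  show ?thesis by (rule D[THEN conjunct1])
qed

lemma part_unf2:
  assumes H: "pqr_partition p q M a b P Q R r"
  shows "P \<inter> Q = {}"
proof -
  note D = H[unfolded pqr_partition_def]
  show ?thesis by (rule D[THEN conjunct2, THEN conjunct1])
qed

lemma part_unf3:
  assumes H: "pqr_partition p q M a b P Q R r"
  shows "P \<inter> R = {}"
proof -
  note D = H[unfolded pqr_partition_def]
  show ?thesis by (rule D[THEN conjunct2, THEN conjunct2, THEN conjunct1])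
qed

lemma part_unf4:
  assumes H: "pqr_partition p q M a b P Q R r"
  shows "Q \<inter> R = {}"
proof -
  note D = H[unfolded pqr_partition_def]
  show ?thesis by (rule D[THEN conjunct2, THEN conjunct2, THEN conjunct2, THEN conjunct1])
qed

lemma part_unf5:
  assumes H: "pqr_partition p q M a b P Q R r"
  shows "r \<in> {0..<int (p * q)}"
proof -
  note D = H[unfolded pqr_partition_def]
  show ?thesis by (rule D[THEN conjunct2, THEN conjunct2, THEN conjunct2, THEN conjunct2, THEN conjunct1])
qed

lemma part_unf6:
  assumes H: "pqr_partition p q M a b P Q R r"
  shows "card R = 2"
proof -
  note D = H[unfolded pqr_partition_def]
  show ?thesis by (rule D[THEN conjunct2, THEN conjunct2, THEN conjunct2, THEN conjunct2, THEN conjunct2, THEN conjunct1])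
qed

lemma part_unf7:
  assumes H: "pqr_partition p q M a b P Q R r"
  shows "\<forall>k\<in>R. Ldiff p q M a b k = r"
proof -
  note D = H[unfolded pqr_partition_def]
  show ?thesis by (rule D[THEN conjunct2, THEN conjunct2, THEN conjunct2, THEN conjunct2, THEN conjunct2, THEN conjunct2, THEN conjunct1])
qed

lemma part_unf8:
  assumes H: "pqr_partition p q M a b P Q R r"
  shows "card P = p - 1"
proof -
  note D = H[unfolded pqr_partition_def]
  show ?thesis by (rule D[THEN conjunct2, THEN conjunct2, THEN conjunct2, THEN conjunct2, THEN conjunct2, THEN conjunct2, THEN conjunct2, THEN conjunct1])
qed

lemma part_unf9:
  assumes H: "pqr_partition p q M a b P Q R r"
  shows "Ldiff p q M a b ` P = coset_mod p q q r - {r}"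
proof -
  note D = H[unfolded pqr_partition_def]
  show ?thesis by (rule D[THEN conjunct2, THEN conjunct2, THEN conjunct2, THEN conjunct2, THEN conjunct2, THEN conjunct2, THEN conjunct2, THEN conjunct2, THEN conjunct1])
qed

lemma part_unf10:
  assumes H: "pqr_partition p q M a b P Q R r"
  shows "card Q = q - 1"
proof -
  note D = H[unfolded pqr_partition_def]
  show ?thesis by (rule D[THEN conjunct2, THEN conjunct2, THEN conjunct2, THEN conjunct2, THEN conjunct2, THEN conjunct2, THEN conjunct2, THEN conjunct2, THEN conjunct2, THEN conjunct1])
qed

lemma part_unf11:
  assumes H: "pqr_partition p q M a b P Q R r"
  shows "Ldiff p q M a b ` Q = coset_mod p q p r - {r}"
proof -
  note D = H[unfolded pqr_partition_def]
  show ?thesis by (rule D[THEN conjunct2, THEN conjunct2, THEN conjunct2, THEN conjunct2, THEN conjunct2, THEN conjunct2, THEN conjunct2, THEN conjunct2, THEN conjunct2, THEN conjunct2])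
qed

lemma part_vals:
  assumes H: "pqr_partition p q M a b P Q R r"
  shows "P \<subseteq> {..<p+q}" "Q \<subseteq> {..<p+q}" "R \<subseteq> {..<p+q}" "P \<inter> Q = {}" "P \<inter> R = {}" "Q \<inter> R = {}"
    "{..<p+q} - P - Q = R" "0 \<le> r" "r < int p * int q" "card P = p - 1" "card Q = q - 1" "card R = 2"
proof -
  note D1 = part_unf1[OF H]
  show "P \<subseteq> {..<p+q}" "Q \<subseteq> {..<p+q}" "R \<subseteq> {..<p+q}" unfolding D1[symmetric] by blast+
  show "P \<inter> Q = {}" "P \<inter> R = {}" "Q \<inter> R = {}" "card P = p - 1" "card Q = q - 1" "card R = 2"
    by (rule part_unf2[OF H], rule part_unf3[OF H], rule part_unf4[OF H], rule part_unf8[OF H],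
        rule part_unf10[OF H], rule part_unf6[OF H])
  have "r \<in> {0..<int (p * q)}" by (rule part_unf5[OF H])
  then show "0 \<le> r" "r < int p * int q" by simp_all
  show "{..<p+q} - P - Q = R" unfolding D1[symmetric] using part_unf3[OF H] part_unf4[OF H] by blast
qed

lemma part_R: "pqr_partition p q M a b P Q R r \<Longrightarrow> t \<in> R \<Longrightarrow> Ldiff p q M a b t = r"
  using part_unf7 by blast

lemma part_P:
  assumes H: "pqr_partition p q M a b P Q R r" and t: "t \<in> P"
  shows "Ldiff p q M a b t \<noteq> r" "Ldiff p q M a b t mod q = r mod q" "Ldiff p q M a b t mod p \<noteq> r mod p"
proof -
  have "Ldiff p q M a b t \<in> Ldiff p q M a b ` P" using t by (rule imageI)
  then have m: "Ldiff p q M a b t \<in> coset_mod p q q r - {r}" unfolding part_unf9[OF H] .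
  then show ne: "Ldiff p q M a b t \<noteq> r" by simp
  have "q dvd p * q" by simp
  moreover have "Ldiff p q M a b t \<in> coset_mod p q q r" using m by simp
  ultimately show mq: "Ldiff p q M a b t mod q = r mod q" by (rule coset_mod_mem_mod)
  show "Ldiff p q M a b t mod p \<noteq> r mod p"
  proof
    assume "Ldiff p q M a b t mod p = r mod p"
    then have "Ldiff p q M a b t = r" using crt mq L_lo L_hi part_vals(8,9)[OF H] by blast
    then show False using ne by simp
  qed
qed

lemma part_Q:
  assumes H: "pqr_partition p q M a b P Q R r" and t: "t \<in> Q"
  shows "Ldiff p q M a b t \<noteq> r" "Ldiff p q M a b t mod p = r mod p" "Ldiff p q M a b t mod q \<noteq> r mod q"
proof -
  have "Ldiff p q M a b t \<in> Ldiff p q M a b ` Q" using t by (rule imageI)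
  then have m: "Ldiff p q M a b t \<in> coset_mod p q p r - {r}" unfolding part_unf11[OF H] .
  then show ne: "Ldiff p q M a b t \<noteq> r" by simp
  have "p dvd p * q" by simp
  moreover have "Ldiff p q M a b t \<in> coset_mod p q p r" using m by simp
  ultimately show mp: "Ldiff p q M a b t mod p = r mod p" by (rule coset_mod_mem_mod)
  show "Ldiff p q M a b t mod q \<noteq> r mod q"
  proof
    assume mq: "Ldiff p q M a b t mod q = r mod q"
    have "Ldiff p q M a b t = r" using crt[OF mp mq] L_lo L_hi part_vals(8,9)[OF H] by blast
    then show False using ne by simp
  qed
qed

lemma part_inj:
  assumes H: "pqr_partition p q M a b P Q R r"
  shows "inj_on (Ldiff p q M a b) P" "inj_on (Ldiff p q M a b) Q"
proof -
  have rr: "0 \<le> r" "r < int (p * q)" using part_vals(8,9)[OF H] by simp_all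
  have finP: "finite P" "finite Q" using part_vals(1,2)[OF H] finite_subset by blast+
  have rin: "r \<in> coset_mod p q d r" for d
  proof -
    have "r = (r + int d * 0) mod int (p*q)" using rr by simp
    then show ?thesis unfolding coset_mod_def by blast
  qed
  have "card (Ldiff p q M a b ` P) = card (coset_mod p q q r - {r})" unfolding part_unf9[OF H] ..
  also have "\<dots> = p - 1"
  proof -
    have pq': "p * q = q * p" by (rule mult.commute)
    have "card (coset_mod p q q r) = p" by (rule coset_mod_card[OF q_pos p_pos pq'])
    moreover have "finite (coset_mod p q q r)" unfolding coset_mod_image[OF q_pos p_pos pq'] by simp
    ultimately show ?thesis using rin[of q] by simp
  qed
  finally show "inj_on (Ldiff p q M a b) P" using inj_on_iff_eq_card[OF finP(1), of "Ldiff p q M a b"] part_unf8[OF H] by simp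
  have "card (Ldiff p q M a b ` Q) = card (coset_mod p q p r - {r})" unfolding part_unf11[OF H] ..
  also have "\<dots> = q - 1"
  proof -
    have pq': "p * q = p * q" by (rule refl)
    have "card (coset_mod p q p r) = q" by (rule coset_mod_card[OF p_pos q_pos pq'])
    moreover have "finite (coset_mod p q p r)" unfolding coset_mod_image[OF p_pos q_pos pq'] by simp
    ultimately show ?thesis using rin[of p] by simp
  qed
  finally show "inj_on (Ldiff p q M a b) Q" using inj_on_iff_eq_card[OF finP(2), of "Ldiff p q M a b"] part_unf10[OF H] by simp
qed

lemma part_cases:
  assumes H: "pqr_partition p q M a b P Q R r" and t: "t \<in> {..<p+q}"
  shows "t \<in> P \<or> t \<in> Q \<or> t \<in> R"
  using t unfolding part_unf1[OF H, symmetric] by blast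

lemma part_char:
  assumes H: "pqr_partition p q M a b P Q R r" and t: "t \<in> {..<p+q}"
  shows "t \<in> P \<longleftrightarrow> Ldiff p q M a b t \<noteq> r \<and> Ldiff p q M a b t mod q = r mod q"
    "t \<in> Q \<longleftrightarrow> Ldiff p q M a b t \<noteq> r \<and> Ldiff p q M a b t mod p = r mod p"
proof -
  have c: "t \<in> P \<or> t \<in> Q \<or> t \<in> R" by (rule part_cases[OF H t])
  show "t \<in> P \<longleftrightarrow> Ldiff p q M a b t \<noteq> r \<and> Ldiff p q M a b t mod q = r mod q"
  proof
    assume "t \<in> P" then show "Ldiff p q M a b t \<noteq> r \<and> Ldiff p q M a b t mod q = r mod q"
      using part_P[OF H] by blast
  next
    assume a: "Ldiff p q M a b t \<noteq> r \<and> Ldiff p q M a b t mod q = r mod q"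
    have "t \<notin> Q" using part_Q(3)[OF H] a by blast
    moreover have "t \<notin> R" using part_R[OF H] a by blast
    ultimately show "t \<in> P" using c by blast
  qed
  show "t \<in> Q \<longleftrightarrow> Ldiff p q M a b t \<noteq> r \<and> Ldiff p q M a b t mod p = r mod p"
  proof
    assume "t \<in> Q" then show "Ldiff p q M a b t \<noteq> r \<and> Ldiff p q M a b t mod p = r mod p"
      using part_Q[OF H] by blast
  next
    assume a: "Ldiff p q M a b t \<noteq> r \<and> Ldiff p q M a b t mod p = r mod p"
    have "t \<notin> P" using part_P(3)[OF H] a by blast
    moreover have "t \<notin> R" using part_R[OF H] a by blast
    ultimately show "t \<in> Q" using c by blast
  qed
qed

lemma part_rep:
  assumes H: "pqr_partition p q M a b P Q R r" and st: "s \<in> {..<p+q}" "t \<in> {..<p+q}" "s \<noteq> t"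
    and eq: "Ldiff p q M a b s = Ldiff p q M a b t"
  shows "Ldiff p q M a b s = r"
proof (rule ccontr)
  assume ne: "Ldiff p q M a b s \<noteq> r"
  have "s \<notin> R" using part_R[OF H] ne by blast
  then have "s \<in> P \<or> s \<in> Q" using part_cases[OF H st(1)] by blast
  then show False
  proof
    assume s: "s \<in> P"
    then have "t \<in> P" using part_char(1)[OF H st(1)] part_char(1)[OF H st(2)] eq by simp
    then show False using inj_onD[OF part_inj(1)[OF H] eq s] st(3) by blast
  next
    assume s: "s \<in> Q"
    then have "t \<in> Q" using part_char(2)[OF H st(1)] part_char(2)[OF H st(2)] eq by simp
    then show False using inj_onD[OF part_inj(2)[OF H] eq s] st(3) by blast
  qed
qed

lemma two_R:
  assumes H: "pqr_partition p q M a b P Q R r"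
  obtains x y where "x \<in> R" "y \<in> R" "x \<noteq> y" "x \<in> {..<p+q}" "y \<in> {..<p+q}"
proof -
  have "\<exists>x y. R = {x, y} \<and> x \<noteq> y" using part_vals(12)[OF H] by (simp only: card_2_iff)
  then obtain x y where xy: "R = {x, y}" "x \<noteq> y" by blast
  have R: "R \<subseteq> {..<p+q}" by (rule part_vals(3)[OF H])
  have xR: "x \<in> R" "y \<in> R" unfolding xy(1) by simp_all
  have "x \<in> {..<p+q}" "y \<in> {..<p+q}" using R xR by auto
  then show ?thesis using that xR xy(2) by blast
qed

lemma part_uniq:
  assumes H: "pqr_partition p q M a b P Q R r" and H': "pqr_partition p q M a b P' Q' R' r'"
  shows "P' = P" "Q' = Q"
proof -
  obtain x y where xy: "x \<in> R'" "y \<in> R'" "x \<noteq> y" "x \<in> {..<p+q}" "y \<in> {..<p+q}" by (rule two_R[OF H'])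
  have lx: "Ldiff p q M a b x = r'" "Ldiff p q M a b y = r'" using part_R[OF H'] xy by blast+
  then have "Ldiff p q M a b x = r" using part_rep[OF H xy(4,5,3)] by simp
  then have rr: "r' = r" using lx by simp
  have PS: "P \<subseteq> {..<p+q}" "P' \<subseteq> {..<p+q}" "Q \<subseteq> {..<p+q}" "Q' \<subseteq> {..<p+q}"
    using part_vals(1,2)[OF H] part_vals(1,2)[OF H'] by blast+
  show "P' = P"
  proof (rule set_eqI)
    fix t show "t \<in> P' \<longleftrightarrow> t \<in> P"
    proof (cases "t \<in> {..<p+q}")
      case True then show ?thesis using part_char(1)[OF H True] part_char(1)[OF H' True] rr by simp
    next
      case False then show ?thesis using PS by blast
    qed
  qed
  show "Q' = Q"
  proof (rule set_eqI)
    fix t show "t \<in> Q' \<longleftrightarrow> t \<in> Q"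
    proof (cases "t \<in> {..<p+q}")
      case True then show ?thesis using part_char(2)[OF H True] part_char(2)[OF H' True] rr by simp
    next
      case False then show ?thesis using PS by blast
    qed
  qed
qed

lemma Pset_eq:
  assumes H: "pqr_partition p q M a b P Q R r"
  shows "Pset p q M a b = P" "Qset p q M a b = Q"
proof -
  show "Pset p q M a b = P" unfolding Pset_def
  proof (rule the_equality)
    show "\<exists>Q R r. pqr_partition p q M a b P Q R r" using H by blast
    fix P' assume "\<exists>Q R r. pqr_partition p q M a b P' Q R r"
    then obtain Q' R' r' where "pqr_partition p q M a b P' Q' R' r'" by blast
    then show "P' = P" using part_uniq(1)[OF H] by blast
  qed
  show "Qset p q M a b = Q" unfolding Qset_def
  proof (rule the_equality)
    show "\<exists>P R r. pqr_partition p q M a b P Q R r" using H by blast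
    fix Q' assume "\<exists>P R r. pqr_partition p q M a b P Q' R r"
    then obtain P' R' r' where "pqr_partition p q M a b P' Q' R' r'" by blast
    then show "Q' = Q" using part_uniq(2)[OF H] by blast
  qed
qed

lemma Ldiff_neg: "Ldiff p q M b a t = (- Ldiff p q M a b t) mod int (p*q)"
proof -
  have "(- Ldiff p q M a b t) mod int (p*q) = (- (M b t - M a t)) mod int (p*q)"
    unfolding Ldiff_def by (rule mod_minus_eq)
  then show ?thesis unfolding Ldiff_def by simp
qed

lemma neg_eq_iff:
  assumes "0 \<le> x" "x < int p * int q" "0 \<le> y" "y < int p * int q"
  shows "(- x) mod int (p*q) = (- y) mod int (p*q) \<longleftrightarrow> x = y"
proof
  assume "(- x) mod int (p*q) = (- y) mod int (p*q)"
  then have "(0 - x) mod (int p * int q) = (0 - y) mod (int p * int q)" by simp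
  then show "x = y" by (rule sub_cancel1[OF assms])
qed simp

lemma part_sym:
  assumes H: "pqr_partition p q M a b P Q R r" and H': "pqr_partition p q M b a P' Q' R' r'"
  shows "P' = P" "Q' = Q"
proof -
  let ?n = "int (p*q)"
  have r0: "0 \<le> r" "r < int p * int q" using part_vals(8,9)[OF H] by simp_all
  obtain x y where xy: "x \<in> R'" "y \<in> R'" "x \<noteq> y" "x \<in> {..<p+q}" "y \<in> {..<p+q}" by (rule two_R[OF H'])
  have lx: "Ldiff p q M b a x = r'" "Ldiff p q M b a y = r'" using part_R[OF H'] xy by blast+
  then have "(- Ldiff p q M a b x) mod ?n = (- Ldiff p q M a b y) mod ?n"
    unfolding Ldiff_neg[of b a] by simp
  then have "Ldiff p q M a b x = Ldiff p q M a b y" using neg_eq_iff L_lo L_hi by blast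
  then have lxr: "Ldiff p q M a b x = r" using part_rep[OF H xy(4,5,3)] by simp
  have rr': "r' = (- r) mod ?n" using lx(1) lxr unfolding Ldiff_neg[of b a] by simp
  have c1: "Ldiff p q M b a t \<noteq> r' \<longleftrightarrow> Ldiff p q M a b t \<noteq> r" for t
    unfolding Ldiff_neg[of b a] rr' using neg_eq_iff[OF L_lo L_hi r0] by simp
  have c2: "Ldiff p q M b a t mod d = r' mod d \<longleftrightarrow> Ldiff p q M a b t mod d = r mod d" if "d dvd p * q" for t d
  proof -
    have dv: "int d dvd ?n" using that by (simp only: of_nat_dvd_iff)
    have "Ldiff p q M b a t mod d = (- Ldiff p q M a b t) mod d"
      unfolding Ldiff_neg[of b a] using dv by (rule mod_mod_cancel)
    moreover have "r' mod d = (- r) mod d" unfolding rr' using dv by (rule mod_mod_cancel)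
    ultimately show ?thesis using neg_mod_iff by simp
  qed
  have dq: "q dvd p * q" and dp: "p dvd p * q" by simp_all
  have PS: "P \<subseteq> {..<p+q}" "P' \<subseteq> {..<p+q}" "Q \<subseteq> {..<p+q}" "Q' \<subseteq> {..<p+q}"
    using part_vals(1,2)[OF H] part_vals(1,2)[OF H'] by blast+
  show "P' = P"
  proof (rule set_eqI)
    fix t show "t \<in> P' \<longleftrightarrow> t \<in> P"
    proof (cases "t \<in> {..<p+q}")
      case True then show ?thesis
        using part_char(1)[OF H True] part_char(1)[OF H' True] c1[of t] c2[OF dq, of t] by simp
    next
      case False then show ?thesis using PS by blast
    qed
  qed
  show "Q' = Q"
  proof (rule set_eqI)
    fix t show "t \<in> Q' \<longleftrightarrow> t \<in> Q"
    proof (cases "t \<in> {..<p+q}")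
      case True then show ?thesis
        using part_char(2)[OF H True] part_char(2)[OF H' True] c1[of t] c2[OF dp, of t] by simp
    next
      case False then show ?thesis using PS by blast
    qed
  qed
qed

lemma part_pdata:
  assumes H: "pqr_partition p q M a b P Q R r"
  shows "pdata p q {..<p+q} P Q (\<lambda>t. Ldiff p q M a b t mod int p) (r mod int p)
            (\<lambda>t. Ldiff p q M a b t mod int q) (r mod int q)"
proof -
  note V = part_vals[OF H] and I = part_inj[OF H]
  have hp: "half (int p) {..<p+q} (\<lambda>t. Ldiff p q M a b t mod int p) (r mod int p) P"
    unfolding half_def
  proof (intro conjI ballI allI)
    fix t assume t: "t \<in> {..<p+q} - P"
    then have "t \<in> Q \<or> t \<in> R" using part_cases[OF H] by blast
    then show "Ldiff p q M a b t mod int p = r mod int p" using part_R[OF H] part_Q(2)[OF H] by metis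
  next
    show "inj_on (\<lambda>t. Ldiff p q M a b t mod int p) P"
    proof (rule inj_onI)
      fix s t assume s: "s \<in> P" and t: "t \<in> P" and e: "Ldiff p q M a b s mod int p = Ldiff p q M a b t mod int p"
      have "Ldiff p q M a b s mod int q = Ldiff p q M a b t mod int q" using part_P(2)[OF H s] part_P(2)[OF H t] by simp
      then have "Ldiff p q M a b s = Ldiff p q M a b t" using crt[OF e] L_lo L_hi by blast
      then show "s = t" using inj_onD[OF I(1) _ s t] by blast
    qed
  next
    fix t assume "t \<in> P" then show "Ldiff p q M a b t mod int p \<noteq> r mod int p" using part_P(3)[OF H] by blast
  qed (use p_pos in simp_all)
  have hq: "half (int q) {..<p+q} (\<lambda>t. Ldiff p q M a b t mod int q) (r mod int q) Q"
    unfolding half_def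
  proof (intro conjI ballI allI)
    fix t assume t: "t \<in> {..<p+q} - Q"
    then have "t \<in> P \<or> t \<in> R" using part_cases[OF H] by blast
    then show "Ldiff p q M a b t mod int q = r mod int q" using part_R[OF H] part_P(2)[OF H] by metis
  next
    show "inj_on (\<lambda>t. Ldiff p q M a b t mod int q) Q"
    proof (rule inj_onI)
      fix s t assume s: "s \<in> Q" and t: "t \<in> Q" and e: "Ldiff p q M a b s mod int q = Ldiff p q M a b t mod int q"
      have "Ldiff p q M a b s mod int p = Ldiff p q M a b t mod int p" using part_Q(2)[OF H s] part_Q(2)[OF H t] by simp
      then have "Ldiff p q M a b s = Ldiff p q M a b t" using crt[OF _ e] L_lo L_hi by blast
      then show "s = t" using inj_onD[OF I(2) _ s t] by blast
    qed
  next
    fix t assume "t \<in> Q" then show "Ldiff p q M a b t mod int q \<noteq> r mod int q" using part_Q(3)[OF H] by blast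
  qed (use q_pos in simp_all)
  show ?thesis unfolding pdata_def using V(1,2,4,10,11) hp hq by blast
qed

lemma Ldiff_rel:
  assumes "d dvd p * q"
  shows "Ldiff p q M b c t mod int d = (Ldiff p q M a c t mod int d - Ldiff p q M a b t mod int d) mod int d"
proof -
  have dv: "int d dvd int (p*q)" using assms by (simp only: of_nat_dvd_iff)
  have 1: "Ldiff p q M b c t mod int d = (M c t - M b t) mod int d"
    unfolding Ldiff_def using dv by (rule mod_mod_cancel)
  have 2: "Ldiff p q M a c t mod int d = (M c t - M a t) mod int d"
    unfolding Ldiff_def using dv by (rule mod_mod_cancel)
  have 3: "Ldiff p q M a b t mod int d = (M b t - M a t) mod int d"
    unfolding Ldiff_def using dv by (rule mod_mod_cancel)
  have "(Ldiff p q M a c t mod int d - Ldiff p q M a b t mod int d) mod int d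
      = ((M c t - M a t) mod int d - (M b t - M a t) mod int d) mod int d" unfolding 2 3 ..
  also have "\<dots> = ((M c t - M a t) - (M b t - M a t)) mod int d" by (rule mod_diff_eq)
  also have "\<dots> = (M c t - M b t) mod int d" by simp
  finally show ?thesis unfolding 1 by simp
qed

end




context
  fixes p q :: nat and M :: "nat \<Rightarrow> nat \<Rightarrow> int"
  assumes pp: "prime p" and pq: "prime q" and pne: "p \<noteq> q"
    and Hex: "\<forall>i<p + q. \<forall>j<p + q. i \<noteq> j \<longrightarrow> (\<exists>P Q R r. pqr_partition p q M i j P Q R r)"
    and p5: "p \<ge> 5" and q5: "q \<ge> 5"
begin

lemma pd:
  assumes "a < p + q" "b < p + q" "a \<noteq> b"
  shows "\<exists>r s. pdata p q {..<p+q} (Pset p q M a b) (Qset p q M a b) (\<lambda>t. Ldiff p q M a b t mod int p) r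
            (\<lambda>t. Ldiff p q M a b t mod int q) s"
proof -
  obtain P Q R r where H: "pqr_partition p q M a b P Q R r" using Hex assms by blast
  show ?thesis using part_pdata[OF pp pq pne H] Pset_eq[OF pp pq pne H] by auto
qed

lemma sym:
  assumes "a < p + q" "b < p + q" "a \<noteq> b"
  shows "Pset p q M b a = Pset p q M a b" "Qset p q M b a = Qset p q M a b"
proof -
  obtain P Q R r where H: "pqr_partition p q M a b P Q R r" using Hex assms by blast
  obtain P' Q' R' r' where H': "pqr_partition p q M b a P' Q' R' r'" using Hex assms by blast
  show "Pset p q M b a = Pset p q M a b" "Qset p q M b a = Qset p q M a b"
    using Pset_eq[OF pp pq pne H] Pset_eq[OF pp pq pne H'] part_sym[OF pp pq pne H H'] by auto
qed

lemma trip: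
  assumes "h < p + q" "j < p + q" "k < p + q" "h \<noteq> j" "h \<noteq> k" "j \<noteq> k"
  shows "\<exists>r1 s1 r2 s2 r3 s3. triple p q {..<p+q}
     (Pset p q M h j) (Qset p q M h j) (\<lambda>t. Ldiff p q M h j t mod int p) r1 (\<lambda>t. Ldiff p q M h j t mod int q) s1
     (Pset p q M h k) (Qset p q M h k) (\<lambda>t. Ldiff p q M h k t mod int p) r2 (\<lambda>t. Ldiff p q M h k t mod int q) s2
     (Pset p q M j k) (Qset p q M j k) (\<lambda>t. Ldiff p q M j k t mod int p) r3 (\<lambda>t. Ldiff p q M j k t mod int q) s3"
proof -
  obtain r1 s1 where 1: "pdata p q {..<p+q} (Pset p q M h j) (Qset p q M h j) (\<lambda>t. Ldiff p q M h j t mod int p) r1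
            (\<lambda>t. Ldiff p q M h j t mod int q) s1" using pd assms by blast
  obtain r2 s2 where 2: "pdata p q {..<p+q} (Pset p q M h k) (Qset p q M h k) (\<lambda>t. Ldiff p q M h k t mod int p) r2
            (\<lambda>t. Ldiff p q M h k t mod int q) s2" using pd assms by blast
  obtain r3 s3 where 3: "pdata p q {..<p+q} (Pset p q M j k) (Qset p q M j k) (\<lambda>t. Ldiff p q M j k t mod int p) r3
            (\<lambda>t. Ldiff p q M j k t mod int q) s3" using pd assms by blast
  have rel: "\<forall>t\<in>{..<p+q}. Ldiff p q M j k t mod int p = (Ldiff p q M h k t mod int p - Ldiff p q M h j t mod int p) mod int p \<and>
      Ldiff p q M j k t mod int q = (Ldiff p q M h k t mod int q - Ldiff p q M h j t mod int q) mod int q"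
    using Ldiff_rel[OF pp pq pne, of p M j k _ h] Ldiff_rel[OF pp pq pne, of q M j k _ h] by simp
  have "triple p q {..<p+q}
     (Pset p q M h j) (Qset p q M h j) (\<lambda>t. Ldiff p q M h j t mod int p) r1 (\<lambda>t. Ldiff p q M h j t mod int q) s1
     (Pset p q M h k) (Qset p q M h k) (\<lambda>t. Ldiff p q M h k t mod int p) r2 (\<lambda>t. Ldiff p q M h k t mod int q) s2
     (Pset p q M j k) (Qset p q M j k) (\<lambda>t. Ldiff p q M j k t mod int p) r3 (\<lambda>t. Ldiff p q M j k t mod int q) s3"
    unfolding triple_def using 1 2 3 rel p5 q5 by simp
  then show ?thesis by blast
qed

lemma PQdisj:
  assumes "i < p + q" "j < p + q" "k < p + q" "i \<noteq> j" "i \<noteq> k"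
  shows "Pset p q M i j \<inter> Qset p q M i k = {}" "Qset p q M i j \<inter> Pset p q M i k = {}"
proof -
  have "Pset p q M i j \<inter> Qset p q M i k = {} \<and> Qset p q M i j \<inter> Pset p q M i k = {}"
  proof (cases "j = k")
    case True
    then show ?thesis
      using pd[of i j] assms unfolding pdata_def by auto
  next
    case False
    then obtain r1 s1 r2 s2 r3 s3 where T: "triple p q {..<p+q}
     (Pset p q M i j) (Qset p q M i j) (\<lambda>t. Ldiff p q M i j t mod int p) r1 (\<lambda>t. Ldiff p q M i j t mod int q) s1
     (Pset p q M i k) (Qset p q M i k) (\<lambda>t. Ldiff p q M i k t mod int p) r2 (\<lambda>t. Ldiff p q M i k t mod int q) s2
     (Pset p q M j k) (Qset p q M j k) (\<lambda>t. Ldiff p q M j k t mod int p) r3 (\<lambda>t. Ldiff p q M j k t mod int q) s3"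
      using trip[of i j k] assms by blast
    show ?thesis
      using L3(1,2)[OF T] by auto
  qed
  then show "Pset p q M i j \<inter> Qset p q M i k = {}" "Qset p q M i j \<inter> Pset p q M i k = {}" by simp_all
qed

lemma cardR:
  assumes "a < p + q" "b < p + q" "a \<noteq> b"
  shows "card ({..<p+q} - Pset p q M a b - Qset p q M a b) = 2"
proof -
  obtain P Q R r where H: "pqr_partition p q M a b P Q R r" using Hex assms by blast
  show ?thesis using part_vals(7,12)[OF pp pq pne H] Pset_eq[OF pp pq pne H] by simp
qed

lemma PS: "a < p + q \<Longrightarrow> b < p + q \<Longrightarrow> a \<noteq> b \<Longrightarrow> Pset p q M a b \<subseteq> {..<p+q} \<and> Qset p q M a b \<subseteq> {..<p+q}
   \<and> card (Pset p q M a b) = p - 1 \<and> card (Qset p q M a b) = q - 1"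
  using pd[of a b] unfolding pdata_def by auto

lemma KP:
  assumes "i < p + q" "j < p + q" "k < p + q" "l < p + q" "i \<noteq> j" "k \<noteq> l"
  shows "card (Pset p q M i j \<inter> ({..<p+q} - Pset p q M k l)) \<le> 2"
proof -
  have share: "card (Pset p q M i j \<inter> ({..<p+q} - Pset p q M i l')) \<le> 2" if "l' < p + q" "i \<noteq> l'" for l'
  proof -
    have "Pset p q M i j \<inter> ({..<p+q} - Pset p q M i l') \<subseteq> {..<p+q} - Pset p q M i l' - Qset p q M i l'"
      using PQdisj(1)[of i j l'] that assms by auto
    then have "card (Pset p q M i j \<inter> ({..<p+q} - Pset p q M i l')) \<le> card ({..<p+q} - Pset p q M i l' - Qset p q M i l')"
      by (intro card_mono) auto
    then show ?thesis using cardR[of i l'] that assms by simp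
  qed
  show ?thesis
  proof (cases "k = i")
    case True then show ?thesis using share assms by simp
  next
    case ki: False
    show ?thesis
    proof (cases "l = i")
      case True
      then have "Pset p q M k l = Pset p q M i k" using sym[of i k] assms ki by simp
      then show ?thesis using share[of k] assms ki by simp
    next
      case li: False
      obtain r1 s1 r2 s2 r3 s3 where T: "triple p q {..<p+q}
       (Pset p q M i k) (Qset p q M i k) (\<lambda>t. Ldiff p q M i k t mod int p) r1 (\<lambda>t. Ldiff p q M i k t mod int q) s1
       (Pset p q M i l) (Qset p q M i l) (\<lambda>t. Ldiff p q M i l t mod int p) r2 (\<lambda>t. Ldiff p q M i l t mod int q) s2
       (Pset p q M k l) (Qset p q M k l) (\<lambda>t. Ldiff p q M k l t mod int p) r3 (\<lambda>t. Ldiff p q M k l t mod int q) s3"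
        using trip[of i k l] assms ki li by metis
      show ?thesis
        by (rule L3(3)[OF T]) (use PS[of i j] PQdisj(1)[of i j k] PQdisj(1)[of i j l] assms ki li in auto)
    qed
  qed
qed

lemma KQ:
  assumes "i < p + q" "j < p + q" "k < p + q" "l < p + q" "i \<noteq> j" "k \<noteq> l"
  shows "card (Qset p q M i j \<inter> ({..<p+q} - Qset p q M k l)) \<le> 2"
proof -
  have share: "card (Qset p q M i j \<inter> ({..<p+q} - Qset p q M i l')) \<le> 2" if "l' < p + q" "i \<noteq> l'" for l'
  proof -
    have "Qset p q M i j \<inter> ({..<p+q} - Qset p q M i l') \<subseteq> {..<p+q} - Pset p q M i l' - Qset p q M i l'"
      using PQdisj(2)[of i j l'] that assms by auto
    then have "card (Qset p q M i j \<inter> ({..<p+q} - Qset p q M i l')) \<le> card ({..<p+q} - Pset p q M i l' - Qset p q M i l')"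
      by (intro card_mono) auto
    then show ?thesis using cardR[of i l'] that assms by simp
  qed
  show ?thesis
  proof (cases "k = i")
    case True then show ?thesis using share assms by simp
  next
    case ki: False
    show ?thesis
    proof (cases "l = i")
      case True
      then have "Qset p q M k l = Qset p q M i k" using sym[of i k] assms ki by simp
      then show ?thesis using share[of k] assms ki by simp
    next
      case li: False
      obtain r1 s1 r2 s2 r3 s3 where T: "triple p q {..<p+q}
       (Pset p q M i k) (Qset p q M i k) (\<lambda>t. Ldiff p q M i k t mod int p) r1 (\<lambda>t. Ldiff p q M i k t mod int q) s1
       (Pset p q M i l) (Qset p q M i l) (\<lambda>t. Ldiff p q M i l t mod int p) r2 (\<lambda>t. Ldiff p q M i l t mod int q) s2
       (Pset p q M k l) (Qset p q M k l) (\<lambda>t. Ldiff p q M k l t mod int p) r3 (\<lambda>t. Ldiff p q M k l t mod int q) s3"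
        using trip[of i k l] assms ki li by metis
      show ?thesis
        by (rule L3(3)[OF triple_swap[OF T]]) (use PS[of i j] PQdisj(2)[of i j k] PQdisj(2)[of i j l] assms ki li in auto)
    qed
  qed
qed

lemma final:
  assumes "i < p + q" "j < p + q" "k < p + q" "l < p + q" "i \<noteq> j" "k \<noteq> l"
  shows "card (Pset p q M i j \<inter> Pset p q M k l) \<ge> p - 3 \<and> card (Qset p q M i j \<inter> Qset p q M k l) \<ge> q - 3"
proof -
  have ps: "Pset p q M i j \<subseteq> {..<p+q}" "Qset p q M i j \<subseteq> {..<p+q}"
    "card (Pset p q M i j) = p - 1" "card (Qset p q M i j) = q - 1" using PS[of i j] assms by auto
  have fin: "finite (Pset p q M i j)" "finite (Qset p q M i j)" using ps finite_subset by blast+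
  have "card (Pset p q M i j) = card (Pset p q M i j \<inter> Pset p q M k l) + card (Pset p q M i j - Pset p q M k l)"
    using card_Int_Diff[OF fin(1)] by blast
  moreover have "Pset p q M i j - Pset p q M k l = Pset p q M i j \<inter> ({..<p+q} - Pset p q M k l)" using ps by auto
  ultimately have 1: "card (Pset p q M i j \<inter> Pset p q M k l) \<ge> p - 3" using KP[OF assms] ps(3) by simp
  have "card (Qset p q M i j) = card (Qset p q M i j \<inter> Qset p q M k l) + card (Qset p q M i j - Qset p q M k l)"
    using card_Int_Diff[OF fin(2)] by blast
  moreover have "Qset p q M i j - Qset p q M k l = Qset p q M i j \<inter> ({..<p+q} - Qset p q M k l)" using ps by auto
  ultimately have 2: "card (Qset p q M i j \<inter> Qset p q M k l) \<ge> q - 3" using KQ[OF assms] ps(4) by simp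
  show ?thesis using 1 2 by simp
qed

end

theorem corollary6p8:
  fixes p q :: nat and M :: "nat \<Rightarrow> nat \<Rightarrow> int"
  assumes "prime p" and "prime q" and "p \<noteq> q"
    and "hadamard_phase (p + q) (p * q) M"
    and "\<forall>i<p + q. \<forall>j<p + q. i \<noteq> j \<longrightarrow> (\<exists>P Q R r. pqr_partition p q M i j P Q R r)"
    and "p \<ge> 5" and "q \<ge> 5"
  shows "\<forall>i<p + q. \<forall>j<p + q. \<forall>k<p + q. \<forall>l<p + q. i \<noteq> j \<longrightarrow> k \<noteq> l \<longrightarrow>
           card (Pset p q M i j \<inter> Pset p q M k l) \<ge> p - 3 \<and>
           card (Qset p q M i j \<inter> Qset p q M k l) \<ge> q - 3"
  using final[OF assms(1,2,3,5,6,7)] by blast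



end
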